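(* Let $\mathcal{G}$ be the complete quadrilateral, let $R$ be a commutative ring with $2=0$ and let $A=M_R(\mathcal{G},1)$ (a free $R$-module of rank $6$). For each of the $4$ lines $\ell$ of $\mathcal{G}$, let $A^\ell_0$ and $A^\ell_1$ be the eigenspaces of $\operatorname{ad}_\ell$ for the eigenvalues $0$ and $1$. Then for each line $\ell$, $A=A^\ell_0\oplus A^\ell_1$ and \[ A^\ell_0A^\ell_0\subseteq A^\ell_0,\quad A^\ell_0A^\ell_1\subseteq A^\ell_1,\quad A^\ell_1A^\ell_1=0 , \] i.e. $A$ is a decomposition algebra with fusion law $0*0=\{0\}$, $0*1=1*0=\{1\}$, $1*1=\emptyset$. Moreover, the subspaces $A^\ell_1$ coincide for all $4$ choices of $\ell$.
   Context: The complete quadrilateral is the partial linear space with $6$ points $a,b,c,x,y,z$ and $4$ lines $\{a,b,c\}$, $\{a,y,z\}$, $\{b,x,z\}$, $\{c,x,y\}$ (the Fischer space of $\mathrm{Sym}(4)$ with its transpositions). For distinct collinear points $p,q$ (written $p\sim q$), $p\wedge q$ denotes the third point of their line. The nilpotent Matsuo algebra $A=M_R(\mathcal{G},1)$ is the free $R$-module with basis the points and commutative bilinear product $p\cdot q=0$ if $p=q$ or $p\not\sim q$, and $p\cdot q=p+q+p\wedge q$ if $p\sim q$. For a line $\ell$, we also write $\ell$ for the sum of its three points in $A$, and $\operatorname{ad}_\ell(v)=\ell v$; the eigenspace for $\lambda$ is $\{v:\ell v=\lambda v\}$. *)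

theory Defs
  imports Main "HOL-Library.Function_Algebras"
begin

datatype pt = Pa | Pb | Pc | Px | Py | Pz

instance pt :: finite
proof
  have "(UNIV :: pt set) = {Pa, Pb, Pc, Px, Py, Pz}"
    by (auto intro: pt.exhaust)
  then show "finite (UNIV :: pt set)" by (metis finite.emptyI finite_insert)
qed

definition lines :: "pt set set" where
  "lines = {{Pa, Pb, Pc}, {Pa, Py, Pz}, {Pb, Px, Pz}, {Pc, Px, Py}}"

definition collinear :: "pt \<Rightarrow> pt \<Rightarrow> bool" where
  "collinear p q \<longleftrightarrow> p \<noteq> q \<and> (\<exists>l\<in>lines. p \<in> l \<and> q \<in> l)"

definition wedge :: "pt \<Rightarrow> pt \<Rightarrow> pt" where
  "wedge p q = (THE r. r \<noteq> p \<and> r \<noteq> q \<and> {p, q, r} \<in> lines)"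

text \<open>Elements of A = M_R(G,1): R-valued coordinate functions on the basis of points.\<close>
type_synonym 'r alg = "pt \<Rightarrow> 'r"

definition bprod :: "pt \<Rightarrow> pt \<Rightarrow> 'r::comm_ring_1 alg" where
  "bprod p q = (if collinear p q
                then (\<lambda>r. if r \<in> {p, q, wedge p q} then 1 else 0)
                else (\<lambda>r. 0))"

definition amult :: "'r::comm_ring_1 alg \<Rightarrow> 'r alg \<Rightarrow> 'r alg" where
  "amult u v = (\<lambda>r. \<Sum>p\<in>UNIV. \<Sum>q\<in>UNIV. u p * v q * bprod p q r)"

text \<open>A line viewed as the sum of its three points.\<close>
definition lvec :: "pt set \<Rightarrow> 'r::comm_ring_1 alg" where
  "lvec l = (\<lambda>r. if r \<in> l then 1 else 0)"

definition eigsp :: "pt set \<Rightarrow> 'r::comm_ring_1 \<Rightarrow> 'r alg set" where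
  "eigsp l lam = {v. amult (lvec l) v = (\<lambda>r. lam * v r)}"

end

theory Submission
  imports Defs
begin

lemma UNIV_pt: "(UNIV::pt set) = {Pa,Pb,Pc,Px,Py,Pz}" by (auto intro: pt.exhaust)
lemma coll: "collinear p q \<longleftrightarrow> p \<noteq> q \<and> \<not> ({p,q} = {Pa,Px} \<or> {p,q} = {Pb,Py} \<or> {p,q} = {Pc,Pz})"
  unfolding collinear_def lines_def by (cases p; cases q; auto)
lemma wedge_Pa_Pb[simp]: "wedge Pa Pb = Pc" unfolding wedge_def lines_def
  by (rule the_equality) (auto simp: insert_eq_iff doubleton_eq_iff)
lemma wedge_Pa_Pc[simp]: "wedge Pa Pc = Pb" unfolding wedge_def lines_def
  by (rule the_equality) (auto simp: insert_eq_iff doubleton_eq_iff)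
lemma wedge_Pb_Pa[simp]: "wedge Pb Pa = Pc" unfolding wedge_def lines_def
  by (rule the_equality) (auto simp: insert_eq_iff doubleton_eq_iff)
lemma wedge_Pb_Pc[simp]: "wedge Pb Pc = Pa" unfolding wedge_def lines_def
  by (rule the_equality) (auto simp: insert_eq_iff doubleton_eq_iff)
lemma wedge_Pc_Pa[simp]: "wedge Pc Pa = Pb" unfolding wedge_def lines_def
  by (rule the_equality) (auto simp: insert_eq_iff doubleton_eq_iff)
lemma wedge_Pc_Pb[simp]: "wedge Pc Pb = Pa" unfolding wedge_def lines_def
  by (rule the_equality) (auto simp: insert_eq_iff doubleton_eq_iff)
lemma wedge_Pa_Py[simp]: "wedge Pa Py = Pz" unfolding wedge_def lines_def
  by (rule the_equality) (auto simp: insert_eq_iff doubleton_eq_iff)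
lemma wedge_Pa_Pz[simp]: "wedge Pa Pz = Py" unfolding wedge_def lines_def
  by (rule the_equality) (auto simp: insert_eq_iff doubleton_eq_iff)
lemma wedge_Py_Pa[simp]: "wedge Py Pa = Pz" unfolding wedge_def lines_def
  by (rule the_equality) (auto simp: insert_eq_iff doubleton_eq_iff)
lemma wedge_Py_Pz[simp]: "wedge Py Pz = Pa" unfolding wedge_def lines_def
  by (rule the_equality) (auto simp: insert_eq_iff doubleton_eq_iff)
lemma wedge_Pz_Pa[simp]: "wedge Pz Pa = Py" unfolding wedge_def lines_def
  by (rule the_equality) (auto simp: insert_eq_iff doubleton_eq_iff)
lemma wedge_Pz_Py[simp]: "wedge Pz Py = Pa" unfolding wedge_def lines_def
  by (rule the_equality) (auto simp: insert_eq_iff doubleton_eq_iff)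
lemma wedge_Pb_Px[simp]: "wedge Pb Px = Pz" unfolding wedge_def lines_def
  by (rule the_equality) (auto simp: insert_eq_iff doubleton_eq_iff)
lemma wedge_Pb_Pz[simp]: "wedge Pb Pz = Px" unfolding wedge_def lines_def
  by (rule the_equality) (auto simp: insert_eq_iff doubleton_eq_iff)
lemma wedge_Px_Pb[simp]: "wedge Px Pb = Pz" unfolding wedge_def lines_def
  by (rule the_equality) (auto simp: insert_eq_iff doubleton_eq_iff)
lemma wedge_Px_Pz[simp]: "wedge Px Pz = Pb" unfolding wedge_def lines_def
  by (rule the_equality) (auto simp: insert_eq_iff doubleton_eq_iff)
lemma wedge_Pz_Pb[simp]: "wedge Pz Pb = Px" unfolding wedge_def lines_def
  by (rule the_equality) (auto simp: insert_eq_iff doubleton_eq_iff)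
lemma wedge_Pz_Px[simp]: "wedge Pz Px = Pb" unfolding wedge_def lines_def
  by (rule the_equality) (auto simp: insert_eq_iff doubleton_eq_iff)
lemma wedge_Pc_Px[simp]: "wedge Pc Px = Py" unfolding wedge_def lines_def
  by (rule the_equality) (auto simp: insert_eq_iff doubleton_eq_iff)
lemma wedge_Pc_Py[simp]: "wedge Pc Py = Px" unfolding wedge_def lines_def
  by (rule the_equality) (auto simp: insert_eq_iff doubleton_eq_iff)
lemma wedge_Px_Pc[simp]: "wedge Px Pc = Py" unfolding wedge_def lines_def
  by (rule the_equality) (auto simp: insert_eq_iff doubleton_eq_iff)
lemma wedge_Px_Py[simp]: "wedge Px Py = Pc" unfolding wedge_def lines_def
  by (rule the_equality) (auto simp: insert_eq_iff doubleton_eq_iff)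
lemma wedge_Py_Pc[simp]: "wedge Py Pc = Px" unfolding wedge_def lines_def
  by (rule the_equality) (auto simp: insert_eq_iff doubleton_eq_iff)
lemma wedge_Py_Px[simp]: "wedge Py Px = Pc" unfolding wedge_def lines_def
  by (rule the_equality) (auto simp: insert_eq_iff doubleton_eq_iff)
lemma amult_Pa[simp]: "amult u v Pa = u Pa * v Pb + u Pa * v Pc + u Pb * v Pa + u Pb * v Pc + u Pc * v Pa + u Pc * v Pb + u Pa * v Py + u Pa * v Pz + u Py * v Pa + u Py * v Pz + u Pz * v Pa + u Pz * v Py"
  unfolding amult_def by (simp add: UNIV_pt bprod_def coll insert_eq_iff doubleton_eq_iff add_ac)
lemma amult_Pb[simp]: "amult u v Pb = u Pa * v Pb + u Pa * v Pc + u Pb * v Pa + u Pb * v Pc + u Pc * v Pa + u Pc * v Pb + u Pb * v Px + u Pb * v Pz + u Px * v Pb + u Px * v Pz + u Pz * v Pb + u Pz * v Px"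
  unfolding amult_def by (simp add: UNIV_pt bprod_def coll insert_eq_iff doubleton_eq_iff add_ac)
lemma amult_Pc[simp]: "amult u v Pc = u Pa * v Pb + u Pa * v Pc + u Pb * v Pa + u Pb * v Pc + u Pc * v Pa + u Pc * v Pb + u Pc * v Px + u Pc * v Py + u Px * v Pc + u Px * v Py + u Py * v Pc + u Py * v Px"
  unfolding amult_def by (simp add: UNIV_pt bprod_def coll insert_eq_iff doubleton_eq_iff add_ac)
lemma amult_Px[simp]: "amult u v Px = u Pb * v Px + u Pb * v Pz + u Px * v Pb + u Px * v Pz + u Pz * v Pb + u Pz * v Px + u Pc * v Px + u Pc * v Py + u Px * v Pc + u Px * v Py + u Py * v Pc + u Py * v Px"
  unfolding amult_def by (simp add: UNIV_pt bprod_def coll insert_eq_iff doubleton_eq_iff add_ac)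
lemma amult_Py[simp]: "amult u v Py = u Pa * v Py + u Pa * v Pz + u Py * v Pa + u Py * v Pz + u Pz * v Pa + u Pz * v Py + u Pc * v Px + u Pc * v Py + u Px * v Pc + u Px * v Py + u Py * v Pc + u Py * v Px"
  unfolding amult_def by (simp add: UNIV_pt bprod_def coll insert_eq_iff doubleton_eq_iff add_ac)
lemma amult_Pz[simp]: "amult u v Pz = u Pa * v Py + u Pa * v Pz + u Py * v Pa + u Py * v Pz + u Pz * v Pa + u Pz * v Py + u Pb * v Px + u Pb * v Pz + u Px * v Pb + u Px * v Pz + u Pz * v Pb + u Pz * v Px"
  unfolding amult_def by (simp add: UNIV_pt bprod_def coll insert_eq_iff doubleton_eq_iff add_ac)

lemma all_pt: "(\<forall>r. P r) \<longleftrightarrow> P Pa \<and> P Pb \<and> P Pc \<and> P Px \<and> P Py \<and> P Pz"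
  by (metis pt.exhaust)

definition A1f :: "'r::comm_ring_1 \<Rightarrow> 'r \<Rightarrow> 'r alg" where
  "A1f s t = (\<lambda>r. case r of Pa \<Rightarrow> s + t | Pb \<Rightarrow> s | Pc \<Rightarrow> t | Px \<Rightarrow> s + t | Py \<Rightarrow> s | Pz \<Rightarrow> t)"

definition A0f1 :: "'r::comm_ring_1 \<Rightarrow> 'r \<Rightarrow> 'r \<Rightarrow> 'r \<Rightarrow> 'r alg" where
  "A0f1 \<alpha> \<beta> \<gamma> \<tau> = (\<lambda>r. case r of Pa \<Rightarrow> \<alpha> | Pb \<Rightarrow> \<beta> | Pc \<Rightarrow> \<gamma> | Px \<Rightarrow> \<tau> | Py \<Rightarrow> \<tau> | Pz \<Rightarrow> \<tau>)"

definition A0f2 :: "'r::comm_ring_1 \<Rightarrow> 'r \<Rightarrow> 'r \<Rightarrow> 'r \<Rightarrow> 'r alg" where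
  "A0f2 \<alpha> \<beta> \<gamma> \<tau> = (\<lambda>r. case r of Pa \<Rightarrow> \<alpha> | Pb \<Rightarrow> \<tau> | Pc \<Rightarrow> \<tau> | Px \<Rightarrow> \<tau> | Py \<Rightarrow> \<beta> | Pz \<Rightarrow> \<gamma>)"

definition A0f3 :: "'r::comm_ring_1 \<Rightarrow> 'r \<Rightarrow> 'r \<Rightarrow> 'r \<Rightarrow> 'r alg" where
  "A0f3 \<alpha> \<beta> \<gamma> \<tau> = (\<lambda>r. case r of Pa \<Rightarrow> \<tau> | Pb \<Rightarrow> \<alpha> | Pc \<Rightarrow> \<tau> | Px \<Rightarrow> \<beta> | Py \<Rightarrow> \<tau> | Pz \<Rightarrow> \<gamma>)"

definition A0f4 :: "'r::comm_ring_1 \<Rightarrow> 'r \<Rightarrow> 'r \<Rightarrow> 'r \<Rightarrow> 'r alg" where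
  "A0f4 \<alpha> \<beta> \<gamma> \<tau> = (\<lambda>r. case r of Pa \<Rightarrow> \<tau> | Pb \<Rightarrow> \<tau> | Pc \<Rightarrow> \<alpha> | Px \<Rightarrow> \<beta> | Py \<Rightarrow> \<gamma> | Pz \<Rightarrow> \<tau>)"

context
  assumes char2: "(2::'r::comm_ring_1) = 0"
begin

lemma c2a: "(a::'r) + a = 0"
  by (metis char2 mult_2 mult_zero_left)
lemma c2b: "(a::'r) + (a + b) = b"
  by (metis add.assoc add_0 c2a)
lemma c2m: "- (a::'r) = a"
  by (metis add_eq_0_iff c2a)
lemma c2s: "(a::'r) - b = a + b"
  by (metis c2m diff_conv_add_uminus)

lemma c2n0: "numeral (Num.Bit0 n) = (0::'r)"
  by (metis char2 mult_zero_left numeral_Bit0 mult_2)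
lemma c2n1: "numeral (Num.Bit1 n) = (1::'r)"
  by (metis c2n0 numeral_Bit1 add_0 numeral_Bit0)

lemmas PS = char2 c2n0 c2n1 distrib_left distrib_right fun_eq_iff all_pt lvec_def
  plus_fun_def zero_fun_def eigsp_def A1f_def

lemma e1_1: "v \<in> eigsp {Pa, Pb, Pc} (1::'r) \<longleftrightarrow> (\<exists>s t. v = A1f s t)"
proof
  assume "v \<in> eigsp {Pa, Pb, Pc} 1"
  hence v: "amult (lvec {Pa, Pb, Pc}) v = v" unfolding eigsp_def by simp
  have "amult (lvec {Pa, Pb, Pc}) v = A1f (amult (lvec {Pa, Pb, Pc}) v Pb) (amult (lvec {Pa, Pb, Pc}) v Pc)"
    by (simp add: PS)
  then show "\<exists>s t. v = A1f s t" using v by metis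
next
  assume "\<exists>s t. v = A1f s t"
  then obtain s t where "v = A1f s t" by blast
  then show "v \<in> eigsp {Pa, Pb, Pc} 1" by (simp add: PS)
qed

lemma e0_1: "v \<in> eigsp {Pa, Pb, Pc} (0::'r) \<Longrightarrow> (\<exists>\<alpha> \<beta> \<gamma> \<tau>. v = A0f1 \<alpha> \<beta> \<gamma> \<tau>)"
proof -
  assume "v \<in> eigsp {Pa, Pb, Pc} 0"
  hence v: "\<forall>r. amult (lvec {Pa, Pb, Pc}) v r = 0" unfolding eigsp_def by (simp add: fun_eq_iff)
  have eq: "(\<lambda>r. v r + amult (lvec {Pa, Pb, Pc}) v r) = A0f1 (v Pa + amult (lvec {Pa, Pb, Pc}) v Pa) (v Pb + amult (lvec {Pa, Pb, Pc}) v Pb) (v Pc + amult (lvec {Pa, Pb, Pc}) v Pc) (v Px + amult (lvec {Pa, Pb, Pc}) v Px)"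
    by (simp add: PS A0f1_def)
  have "(\<lambda>r. v r + amult (lvec {Pa, Pb, Pc}) v r) = v" using v by simp
  with eq show ?thesis by metis
qed

lemma main_1: "(\<forall>v::'r alg. \<exists>!w. w \<in> eigsp {Pa, Pb, Pc} 0 \<times> eigsp {Pa, Pb, Pc} 1 \<and> v = fst w + snd w)
          \<and> (\<forall>u\<in>eigsp {Pa, Pb, Pc} (0::'r). \<forall>w\<in>eigsp {Pa, Pb, Pc} 0. amult u w \<in> eigsp {Pa, Pb, Pc} 0)
          \<and> (\<forall>u\<in>eigsp {Pa, Pb, Pc} (0::'r). \<forall>w\<in>eigsp {Pa, Pb, Pc} 1. amult u w \<in> eigsp {Pa, Pb, Pc} 1 \<and> amult w u \<in> eigsp {Pa, Pb, Pc} 1)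
          \<and> (\<forall>u\<in>eigsp {Pa, Pb, Pc} (1::'r). \<forall>w\<in>eigsp {Pa, Pb, Pc} 1. amult u w = 0)"
proof (intro conjI ballI allI)
  fix v :: "'r alg"
  let ?w = "(\<lambda>r. v r + amult (lvec {Pa, Pb, Pc}) v r, amult (lvec {Pa, Pb, Pc}) v)"
  show "\<exists>!w. w \<in> eigsp {Pa, Pb, Pc} 0 \<times> eigsp {Pa, Pb, Pc} 1 \<and> v = fst w + snd w"
  proof (rule ex1I[of _ ?w])
    show "?w \<in> eigsp {Pa, Pb, Pc} 0 \<times> eigsp {Pa, Pb, Pc} 1 \<and> v = fst ?w + snd ?w"
      by (simp add: PS)
  next
    fix w assume h: "w \<in> eigsp {Pa, Pb, Pc} 0 \<times> eigsp {Pa, Pb, Pc} 1 \<and> v = fst w + snd w"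
    obtain w0 w1 where w: "w = (w0, w1)" by (cases w)
    with h have h0: "w0 \<in> eigsp {Pa, Pb, Pc} 0" and h1: "w1 \<in> eigsp {Pa, Pb, Pc} 1" and hv: "v = w0 + w1" by auto
    from e0_1[OF h0] obtain \<alpha> \<beta> \<gamma> \<tau> where a: "w0 = A0f1 \<alpha> \<beta> \<gamma> \<tau>" by blast
    from h1 obtain s t where b: "w1 = A1f s t" unfolding e1_1 by blast
    show "w = ?w" unfolding w hv a b by (simp add: PS A0f1_def)
  qed
next
  fix u w :: "'r alg" assume "u \<in> eigsp {Pa, Pb, Pc} 0" "w \<in> eigsp {Pa, Pb, Pc} 0"
  then obtain a1 a2 a3 a4 b1 b2 b3 b4 where "u = A0f1 a1 a2 a3 a4" "w = A0f1 b1 b2 b3 b4"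
    using e0_1 by metis
  then show "amult u w \<in> eigsp {Pa, Pb, Pc} 0" by (simp add: PS A0f1_def)
next
  fix u w :: "'r alg" assume "u \<in> eigsp {Pa, Pb, Pc} 0" "w \<in> eigsp {Pa, Pb, Pc} 1"
  then obtain a1 a2 a3 a4 s t where "u = A0f1 a1 a2 a3 a4" "w = A1f s t"
    using e0_1 e1_1 by metis
  then show "amult u w \<in> eigsp {Pa, Pb, Pc} 1" by (simp add: PS A0f1_def)
next
  fix u w :: "'r alg" assume "u \<in> eigsp {Pa, Pb, Pc} 0" "w \<in> eigsp {Pa, Pb, Pc} 1"
  then obtain a1 a2 a3 a4 s t where "u = A0f1 a1 a2 a3 a4" "w = A1f s t"
    using e0_1 e1_1 by metis
  then show "amult w u \<in> eigsp {Pa, Pb, Pc} 1" by (simp add: PS A0f1_def)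
next
  fix u w :: "'r alg" assume "u \<in> eigsp {Pa, Pb, Pc} 1" "w \<in> eigsp {Pa, Pb, Pc} 1"
  then obtain s t s' t' where "u = A1f s t" "w = A1f s' t'"
    using e1_1 by metis
  then show "amult u w = 0" by (simp add: PS)
qed

lemma e1_2: "v \<in> eigsp {Pa, Py, Pz} (1::'r) \<longleftrightarrow> (\<exists>s t. v = A1f s t)"
proof
  assume "v \<in> eigsp {Pa, Py, Pz} 1"
  hence v: "amult (lvec {Pa, Py, Pz}) v = v" unfolding eigsp_def by simp
  have "amult (lvec {Pa, Py, Pz}) v = A1f (amult (lvec {Pa, Py, Pz}) v Pb) (amult (lvec {Pa, Py, Pz}) v Pc)"
    by (simp add: PS)
  then show "\<exists>s t. v = A1f s t" using v by metis
next
  assume "\<exists>s t. v = A1f s t"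
  then obtain s t where "v = A1f s t" by blast
  then show "v \<in> eigsp {Pa, Py, Pz} 1" by (simp add: PS)
qed

lemma e0_2: "v \<in> eigsp {Pa, Py, Pz} (0::'r) \<Longrightarrow> (\<exists>\<alpha> \<beta> \<gamma> \<tau>. v = A0f2 \<alpha> \<beta> \<gamma> \<tau>)"
proof -
  assume "v \<in> eigsp {Pa, Py, Pz} 0"
  hence v: "\<forall>r. amult (lvec {Pa, Py, Pz}) v r = 0" unfolding eigsp_def by (simp add: fun_eq_iff)
  have eq: "(\<lambda>r. v r + amult (lvec {Pa, Py, Pz}) v r) = A0f2 (v Pa + amult (lvec {Pa, Py, Pz}) v Pa) (v Py + amult (lvec {Pa, Py, Pz}) v Py) (v Pz + amult (lvec {Pa, Py, Pz}) v Pz) (v Px + amult (lvec {Pa, Py, Pz}) v Px)"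
    by (simp add: PS A0f2_def)
  have "(\<lambda>r. v r + amult (lvec {Pa, Py, Pz}) v r) = v" using v by simp
  with eq show ?thesis by metis
qed

lemma main_2: "(\<forall>v::'r alg. \<exists>!w. w \<in> eigsp {Pa, Py, Pz} 0 \<times> eigsp {Pa, Py, Pz} 1 \<and> v = fst w + snd w)
          \<and> (\<forall>u\<in>eigsp {Pa, Py, Pz} (0::'r). \<forall>w\<in>eigsp {Pa, Py, Pz} 0. amult u w \<in> eigsp {Pa, Py, Pz} 0)
          \<and> (\<forall>u\<in>eigsp {Pa, Py, Pz} (0::'r). \<forall>w\<in>eigsp {Pa, Py, Pz} 1. amult u w \<in> eigsp {Pa, Py, Pz} 1 \<and> amult w u \<in> eigsp {Pa, Py, Pz} 1)
          \<and> (\<forall>u\<in>eigsp {Pa, Py, Pz} (1::'r). \<forall>w\<in>eigsp {Pa, Py, Pz} 1. amult u w = 0)"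
proof (intro conjI ballI allI)
  fix v :: "'r alg"
  let ?w = "(\<lambda>r. v r + amult (lvec {Pa, Py, Pz}) v r, amult (lvec {Pa, Py, Pz}) v)"
  show "\<exists>!w. w \<in> eigsp {Pa, Py, Pz} 0 \<times> eigsp {Pa, Py, Pz} 1 \<and> v = fst w + snd w"
  proof (rule ex1I[of _ ?w])
    show "?w \<in> eigsp {Pa, Py, Pz} 0 \<times> eigsp {Pa, Py, Pz} 1 \<and> v = fst ?w + snd ?w"
      by (simp add: PS)
  next
    fix w assume h: "w \<in> eigsp {Pa, Py, Pz} 0 \<times> eigsp {Pa, Py, Pz} 1 \<and> v = fst w + snd w"
    obtain w0 w1 where w: "w = (w0, w1)" by (cases w)
    with h have h0: "w0 \<in> eigsp {Pa, Py, Pz} 0" and h1: "w1 \<in> eigsp {Pa, Py, Pz} 1" and hv: "v = w0 + w1" by auto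
    from e0_2[OF h0] obtain \<alpha> \<beta> \<gamma> \<tau> where a: "w0 = A0f2 \<alpha> \<beta> \<gamma> \<tau>" by blast
    from h1 obtain s t where b: "w1 = A1f s t" unfolding e1_2 by blast
    show "w = ?w" unfolding w hv a b by (simp add: PS A0f2_def)
  qed
next
  fix u w :: "'r alg" assume "u \<in> eigsp {Pa, Py, Pz} 0" "w \<in> eigsp {Pa, Py, Pz} 0"
  then obtain a1 a2 a3 a4 b1 b2 b3 b4 where "u = A0f2 a1 a2 a3 a4" "w = A0f2 b1 b2 b3 b4"
    using e0_2 by metis
  then show "amult u w \<in> eigsp {Pa, Py, Pz} 0" by (simp add: PS A0f2_def)
next
  fix u w :: "'r alg" assume "u \<in> eigsp {Pa, Py, Pz} 0" "w \<in> eigsp {Pa, Py, Pz} 1"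
  then obtain a1 a2 a3 a4 s t where "u = A0f2 a1 a2 a3 a4" "w = A1f s t"
    using e0_2 e1_2 by metis
  then show "amult u w \<in> eigsp {Pa, Py, Pz} 1" by (simp add: PS A0f2_def)
next
  fix u w :: "'r alg" assume "u \<in> eigsp {Pa, Py, Pz} 0" "w \<in> eigsp {Pa, Py, Pz} 1"
  then obtain a1 a2 a3 a4 s t where "u = A0f2 a1 a2 a3 a4" "w = A1f s t"
    using e0_2 e1_2 by metis
  then show "amult w u \<in> eigsp {Pa, Py, Pz} 1" by (simp add: PS A0f2_def)
next
  fix u w :: "'r alg" assume "u \<in> eigsp {Pa, Py, Pz} 1" "w \<in> eigsp {Pa, Py, Pz} 1"
  then obtain s t s' t' where "u = A1f s t" "w = A1f s' t'"
    using e1_2 by metis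
  then show "amult u w = 0" by (simp add: PS)
qed

lemma e1_3: "v \<in> eigsp {Pb, Px, Pz} (1::'r) \<longleftrightarrow> (\<exists>s t. v = A1f s t)"
proof
  assume "v \<in> eigsp {Pb, Px, Pz} 1"
  hence v: "amult (lvec {Pb, Px, Pz}) v = v" unfolding eigsp_def by simp
  have "amult (lvec {Pb, Px, Pz}) v = A1f (amult (lvec {Pb, Px, Pz}) v Pb) (amult (lvec {Pb, Px, Pz}) v Pc)"
    by (simp add: PS)
  then show "\<exists>s t. v = A1f s t" using v by metis
next
  assume "\<exists>s t. v = A1f s t"
  then obtain s t where "v = A1f s t" by blast
  then show "v \<in> eigsp {Pb, Px, Pz} 1" by (simp add: PS)
qed

lemma e0_3: "v \<in> eigsp {Pb, Px, Pz} (0::'r) \<Longrightarrow> (\<exists>\<alpha> \<beta> \<gamma> \<tau>. v = A0f3 \<alpha> \<beta> \<gamma> \<tau>)"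
proof -
  assume "v \<in> eigsp {Pb, Px, Pz} 0"
  hence v: "\<forall>r. amult (lvec {Pb, Px, Pz}) v r = 0" unfolding eigsp_def by (simp add: fun_eq_iff)
  have eq: "(\<lambda>r. v r + amult (lvec {Pb, Px, Pz}) v r) = A0f3 (v Pb + amult (lvec {Pb, Px, Pz}) v Pb) (v Px + amult (lvec {Pb, Px, Pz}) v Px) (v Pz + amult (lvec {Pb, Px, Pz}) v Pz) (v Py + amult (lvec {Pb, Px, Pz}) v Py)"
    by (simp add: PS A0f3_def)
  have "(\<lambda>r. v r + amult (lvec {Pb, Px, Pz}) v r) = v" using v by simp
  with eq show ?thesis by metis
qed

lemma main_3: "(\<forall>v::'r alg. \<exists>!w. w \<in> eigsp {Pb, Px, Pz} 0 \<times> eigsp {Pb, Px, Pz} 1 \<and> v = fst w + snd w)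
          \<and> (\<forall>u\<in>eigsp {Pb, Px, Pz} (0::'r). \<forall>w\<in>eigsp {Pb, Px, Pz} 0. amult u w \<in> eigsp {Pb, Px, Pz} 0)
          \<and> (\<forall>u\<in>eigsp {Pb, Px, Pz} (0::'r). \<forall>w\<in>eigsp {Pb, Px, Pz} 1. amult u w \<in> eigsp {Pb, Px, Pz} 1 \<and> amult w u \<in> eigsp {Pb, Px, Pz} 1)
          \<and> (\<forall>u\<in>eigsp {Pb, Px, Pz} (1::'r). \<forall>w\<in>eigsp {Pb, Px, Pz} 1. amult u w = 0)"
proof (intro conjI ballI allI)
  fix v :: "'r alg"
  let ?w = "(\<lambda>r. v r + amult (lvec {Pb, Px, Pz}) v r, amult (lvec {Pb, Px, Pz}) v)"
  show "\<exists>!w. w \<in> eigsp {Pb, Px, Pz} 0 \<times> eigsp {Pb, Px, Pz} 1 \<and> v = fst w + snd w"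
  proof (rule ex1I[of _ ?w])
    show "?w \<in> eigsp {Pb, Px, Pz} 0 \<times> eigsp {Pb, Px, Pz} 1 \<and> v = fst ?w + snd ?w"
      by (simp add: PS)
  next
    fix w assume h: "w \<in> eigsp {Pb, Px, Pz} 0 \<times> eigsp {Pb, Px, Pz} 1 \<and> v = fst w + snd w"
    obtain w0 w1 where w: "w = (w0, w1)" by (cases w)
    with h have h0: "w0 \<in> eigsp {Pb, Px, Pz} 0" and h1: "w1 \<in> eigsp {Pb, Px, Pz} 1" and hv: "v = w0 + w1" by auto
    from e0_3[OF h0] obtain \<alpha> \<beta> \<gamma> \<tau> where a: "w0 = A0f3 \<alpha> \<beta> \<gamma> \<tau>" by blast
    from h1 obtain s t where b: "w1 = A1f s t" unfolding e1_3 by blast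
    show "w = ?w" unfolding w hv a b by (simp add: PS A0f3_def)
  qed
next
  fix u w :: "'r alg" assume "u \<in> eigsp {Pb, Px, Pz} 0" "w \<in> eigsp {Pb, Px, Pz} 0"
  then obtain a1 a2 a3 a4 b1 b2 b3 b4 where "u = A0f3 a1 a2 a3 a4" "w = A0f3 b1 b2 b3 b4"
    using e0_3 by metis
  then show "amult u w \<in> eigsp {Pb, Px, Pz} 0" by (simp add: PS A0f3_def)
next
  fix u w :: "'r alg" assume "u \<in> eigsp {Pb, Px, Pz} 0" "w \<in> eigsp {Pb, Px, Pz} 1"
  then obtain a1 a2 a3 a4 s t where "u = A0f3 a1 a2 a3 a4" "w = A1f s t"
    using e0_3 e1_3 by metis
  then show "amult u w \<in> eigsp {Pb, Px, Pz} 1" by (simp add: PS A0f3_def)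
next
  fix u w :: "'r alg" assume "u \<in> eigsp {Pb, Px, Pz} 0" "w \<in> eigsp {Pb, Px, Pz} 1"
  then obtain a1 a2 a3 a4 s t where "u = A0f3 a1 a2 a3 a4" "w = A1f s t"
    using e0_3 e1_3 by metis
  then show "amult w u \<in> eigsp {Pb, Px, Pz} 1" by (simp add: PS A0f3_def)
next
  fix u w :: "'r alg" assume "u \<in> eigsp {Pb, Px, Pz} 1" "w \<in> eigsp {Pb, Px, Pz} 1"
  then obtain s t s' t' where "u = A1f s t" "w = A1f s' t'"
    using e1_3 by metis
  then show "amult u w = 0" by (simp add: PS)
qed

lemma e1_4: "v \<in> eigsp {Pc, Px, Py} (1::'r) \<longleftrightarrow> (\<exists>s t. v = A1f s t)"
proof
  assume "v \<in> eigsp {Pc, Px, Py} 1"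
  hence v: "amult (lvec {Pc, Px, Py}) v = v" unfolding eigsp_def by simp
  have "amult (lvec {Pc, Px, Py}) v = A1f (amult (lvec {Pc, Px, Py}) v Pb) (amult (lvec {Pc, Px, Py}) v Pc)"
    by (simp add: PS)
  then show "\<exists>s t. v = A1f s t" using v by metis
next
  assume "\<exists>s t. v = A1f s t"
  then obtain s t where "v = A1f s t" by blast
  then show "v \<in> eigsp {Pc, Px, Py} 1" by (simp add: PS)
qed

lemma e0_4: "v \<in> eigsp {Pc, Px, Py} (0::'r) \<Longrightarrow> (\<exists>\<alpha> \<beta> \<gamma> \<tau>. v = A0f4 \<alpha> \<beta> \<gamma> \<tau>)"
proof -
  assume "v \<in> eigsp {Pc, Px, Py} 0"
  hence v: "\<forall>r. amult (lvec {Pc, Px, Py}) v r = 0" unfolding eigsp_def by (simp add: fun_eq_iff)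
  have eq: "(\<lambda>r. v r + amult (lvec {Pc, Px, Py}) v r) = A0f4 (v Pc + amult (lvec {Pc, Px, Py}) v Pc) (v Px + amult (lvec {Pc, Px, Py}) v Px) (v Py + amult (lvec {Pc, Px, Py}) v Py) (v Pz + amult (lvec {Pc, Px, Py}) v Pz)"
    by (simp add: PS A0f4_def)
  have "(\<lambda>r. v r + amult (lvec {Pc, Px, Py}) v r) = v" using v by simp
  with eq show ?thesis by metis
qed

lemma main_4: "(\<forall>v::'r alg. \<exists>!w. w \<in> eigsp {Pc, Px, Py} 0 \<times> eigsp {Pc, Px, Py} 1 \<and> v = fst w + snd w)
          \<and> (\<forall>u\<in>eigsp {Pc, Px, Py} (0::'r). \<forall>w\<in>eigsp {Pc, Px, Py} 0. amult u w \<in> eigsp {Pc, Px, Py} 0)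
          \<and> (\<forall>u\<in>eigsp {Pc, Px, Py} (0::'r). \<forall>w\<in>eigsp {Pc, Px, Py} 1. amult u w \<in> eigsp {Pc, Px, Py} 1 \<and> amult w u \<in> eigsp {Pc, Px, Py} 1)
          \<and> (\<forall>u\<in>eigsp {Pc, Px, Py} (1::'r). \<forall>w\<in>eigsp {Pc, Px, Py} 1. amult u w = 0)"
proof (intro conjI ballI allI)
  fix v :: "'r alg"
  let ?w = "(\<lambda>r. v r + amult (lvec {Pc, Px, Py}) v r, amult (lvec {Pc, Px, Py}) v)"
  show "\<exists>!w. w \<in> eigsp {Pc, Px, Py} 0 \<times> eigsp {Pc, Px, Py} 1 \<and> v = fst w + snd w"
  proof (rule ex1I[of _ ?w])
    show "?w \<in> eigsp {Pc, Px, Py} 0 \<times> eigsp {Pc, Px, Py} 1 \<and> v = fst ?w + snd ?w"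
      by (simp add: PS)
  next
    fix w assume h: "w \<in> eigsp {Pc, Px, Py} 0 \<times> eigsp {Pc, Px, Py} 1 \<and> v = fst w + snd w"
    obtain w0 w1 where w: "w = (w0, w1)" by (cases w)
    with h have h0: "w0 \<in> eigsp {Pc, Px, Py} 0" and h1: "w1 \<in> eigsp {Pc, Px, Py} 1" and hv: "v = w0 + w1" by auto
    from e0_4[OF h0] obtain \<alpha> \<beta> \<gamma> \<tau> where a: "w0 = A0f4 \<alpha> \<beta> \<gamma> \<tau>" by blast
    from h1 obtain s t where b: "w1 = A1f s t" unfolding e1_4 by blast
    show "w = ?w" unfolding w hv a b by (simp add: PS A0f4_def)
  qed
next
  fix u w :: "'r alg" assume "u \<in> eigsp {Pc, Px, Py} 0" "w \<in> eigsp {Pc, Px, Py} 0"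
  then obtain a1 a2 a3 a4 b1 b2 b3 b4 where "u = A0f4 a1 a2 a3 a4" "w = A0f4 b1 b2 b3 b4"
    using e0_4 by metis
  then show "amult u w \<in> eigsp {Pc, Px, Py} 0" by (simp add: PS A0f4_def)
next
  fix u w :: "'r alg" assume "u \<in> eigsp {Pc, Px, Py} 0" "w \<in> eigsp {Pc, Px, Py} 1"
  then obtain a1 a2 a3 a4 s t where "u = A0f4 a1 a2 a3 a4" "w = A1f s t"
    using e0_4 e1_4 by metis
  then show "amult u w \<in> eigsp {Pc, Px, Py} 1" by (simp add: PS A0f4_def)
next
  fix u w :: "'r alg" assume "u \<in> eigsp {Pc, Px, Py} 0" "w \<in> eigsp {Pc, Px, Py} 1"
  then obtain a1 a2 a3 a4 s t where "u = A0f4 a1 a2 a3 a4" "w = A1f s t"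
    using e0_4 e1_4 by metis
  then show "amult w u \<in> eigsp {Pc, Px, Py} 1" by (simp add: PS A0f4_def)
next
  fix u w :: "'r alg" assume "u \<in> eigsp {Pc, Px, Py} 1" "w \<in> eigsp {Pc, Px, Py} 1"
  then obtain s t s' t' where "u = A1f s t" "w = A1f s' t'"
    using e1_4 by metis
  then show "amult u w = 0" by (simp add: PS)
qed

end

theorem theorem5p14:
  assumes char2: "(2::'r::comm_ring_1) = 0"
  shows "(\<forall>l\<in>lines.
            (\<forall>v::'r alg. \<exists>!w. w \<in> eigsp l 0 \<times> eigsp l 1 \<and> v = fst w + snd w)
          \<and> (\<forall>u\<in>eigsp l (0::'r). \<forall>w\<in>eigsp l 0. amult u w \<in> eigsp l 0)
          \<and> (\<forall>u\<in>eigsp l (0::'r). \<forall>w\<in>eigsp l 1. amult u w \<in> eigsp l 1 \<and> amult w u \<in> eigsp l 1)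
          \<and> (\<forall>u\<in>eigsp l (1::'r). \<forall>w\<in>eigsp l 1. amult u w = 0))
       \<and> (\<forall>l\<in>lines. \<forall>l'\<in>lines. eigsp l (1::'r) = eigsp l' 1)"
proof
  show "\<forall>l\<in>lines.
            (\<forall>v::'r alg. \<exists>!w. w \<in> eigsp l 0 \<times> eigsp l 1 \<and> v = fst w + snd w)
          \<and> (\<forall>u\<in>eigsp l (0::'r). \<forall>w\<in>eigsp l 0. amult u w \<in> eigsp l 0)
          \<and> (\<forall>u\<in>eigsp l (0::'r). \<forall>w\<in>eigsp l 1. amult u w \<in> eigsp l 1 \<and> amult w u \<in> eigsp l 1)
          \<and> (\<forall>u\<in>eigsp l (1::'r). \<forall>w\<in>eigsp l 1. amult u w = 0)"
    unfolding lines_def ball_simps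
    by (rule conjI[OF main_1[OF char2] conjI[OF main_2[OF char2]
          conjI[OF main_3[OF char2] conjI[OF main_4[OF char2] TrueI]]]])
next
  have A1: "eigsp {Pa, Pb, Pc} (1::'r) = {v. \<exists>s t. v = A1f s t}" using e1_1[OF char2] by blast
  have A2: "eigsp {Pa, Py, Pz} (1::'r) = {v. \<exists>s t. v = A1f s t}" using e1_2[OF char2] by blast
  have A3: "eigsp {Pb, Px, Pz} (1::'r) = {v. \<exists>s t. v = A1f s t}" using e1_3[OF char2] by blast
  have A4: "eigsp {Pc, Px, Py} (1::'r) = {v. \<exists>s t. v = A1f s t}" using e1_4[OF char2] by blast
  show "\<forall>l\<in>lines. \<forall>l'\<in>lines. eigsp l (1::'r) = eigsp l' 1"
    unfolding lines_def ball_simps A1 A2 A3 A4 by simp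
qed

end
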